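(* Let $n=p\,q^{\alpha}$ with $\alpha\ge 1$ an integer and $p,q$ distinct primes such that $q\not\equiv 1\pmod 3$. If $n$ divides $\sigma_3(n)$, then $n$ is an even perfect number and $n\neq 28$.
   Context: $\sigma_3(n)=\sum_{d\mid n,\ d>0} d^3$. A positive integer $n$ is perfect if $\sum_{d\mid n,\ d>0} d=2n$. *)

theory Defs
  imports "HOL-Computational_Algebra.Primes"
begin

definition sigma3 :: "nat \<Rightarrow> nat" where
  "sigma3 n = (\<Sum>d | d dvd n \<and> d > 0. d ^ 3)"

definition perfect :: "nat \<Rightarrow> bool" where
  "perfect n \<longleftrightarrow> n > 0 \<and> (\<Sum>d | d dvd n \<and> d > 0. d) = 2 * n"

end

theory Submission
  imports Defs "HOL-Number_Theory.Number_Theory"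
begin

lemma br1:
  fixes p q m y :: int
  assumes "p \<ge> 3" "q \<ge> 2" "y \<ge> q" "m \<ge> 1" "p + 1 = m*y" "p dvd q - m" "p \<noteq> q - 1"
  shows "m = q"
proof (rule ccontr)
  assume ne: "m \<noteq> q"
  have myq: "m*y \<ge> m*q" using assms by (intro mult_left_mono) auto
  show False
  proof (cases "m > q")
    case True
    hence "p dvd m - q" using assms(6) by (metis dvd_minus_iff minus_diff_eq)
    hence "p \<le> m - q" using True zdvd_imp_le by auto
    moreover have "m*q \<ge> m*2" using assms by (intro mult_left_mono) auto
    ultimately show False using assms myq by linarith
  next
    case False
    hence "q > m" using ne by auto
    hence "p \<le> q - m" using assms(6) zdvd_imp_le by auto
    hence "m*q + m \<le> q + 1" using assms myq by linarith
    hence "m*(q+1) \<le> 1*(q+1)" by (simp add: algebra_simps)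
    hence "m \<le> 1" using assms(2) by (subst (asm) mult_le_cancel_right_pos) auto
    hence "m = 1" using assms by auto
    thus False using assms myq \<open>p \<le> q - m\<close> by auto
  qed
qed

lemma br2a:
  fixes p q m :: int
  assumes "q \<ge> 2" "m \<ge> 1" "p = m*q - 1" "p \<ge> 3" "p dvd q^2 - q + 1"
  shows "q = 2 \<and> m = 2"
proof -
  obtain r0 where r0: "q^2 - q + 1 = p * r0" using assms(5) by auto
  define r where "r = r0"
  have r: "q^2 - q + 1 = (m*q - 1) * r" using r0 assms(3) r_def by simp
  have "q*(q-1) \<ge> 0" using assms(1) by simp
  hence qq: "q^2 - q + 1 > 0" by (simp add: power2_eq_square algebra_simps)
  hence "r > 0" using r0 r_def assms(4) by (simp add: zero_less_mult_iff)
  define s where "s = m*r - q + 1"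
  have rs: "r = s*q - 1" using r unfolding s_def by (simp add: algebra_simps power2_eq_square)
  have "s \<ge> 1"
  proof (rule ccontr)
    assume "\<not> s \<ge> 1"
    hence "s*q \<le> 0" using assms(1) by (simp add: mult_nonpos_nonneg)
    thus False using rs \<open>r > 0\<close> by linarith
  qed
  have "q * (q - 1) = q * (s*m*q - s - m)" using r rs by (simp add: algebra_simps power2_eq_square)
  hence e: "q - 1 = s*m*q - s - m" using assms(1) by simp
  show ?thesis
  proof (cases "s = 1")
    case True
    hence "(m - 1)*(q - 1) = 1" using e by (simp add: algebra_simps)
    hence "m - 1 = 1 \<and> q - 1 = 1" using assms by (simp add: zmult_eq_1_iff)
    thus ?thesis by auto
  next
    case False
    hence s2: "s \<ge> 2" using \<open>s \<ge> 1\<close> by auto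
    show ?thesis
    proof (cases "m = 1")
      case True
      have "s*(q-1) \<ge> 2*(q-1)" using s2 assms(1) by (intro mult_right_mono) auto
      hence "s*q - s \<ge> 2*q - 2" by (simp add: algebra_simps)
      thus ?thesis using e True assms by simp
    next
      case False
      hence m2: "m \<ge> 2" using assms by auto
      have sm4: "s*m \<ge> 2*2" using s2 m2 by (intro mult_mono) auto
      have "(s-1)*(m-1) \<ge> 1*1" using s2 m2 by (intro mult_mono) auto
      hence smge: "s*m \<ge> s + m" by (simp add: algebra_simps)
      have "s*m*(q-1) \<ge> 4*(q-1)" using sm4 assms(1) by (intro mult_right_mono) auto
      moreover have "s*m*(q-1) = s*m*q - s*m" by (simp add: algebra_simps)
      ultimately have False using e smge assms(1) by (smt (verit))
      thus ?thesis ..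
    qed
  qed
qed

lemma tq:
  fixes q t y :: int
  assumes "q \<ge> 2" "t \<ge> 1" "y = q^2 \<or> y \<ge> q^3" "t*(y-1) = q^2+q+1"
  shows "q = 2 \<and> y = 8 \<and> t = 1"
proof -
  have Q: "q^2 \<ge> 2*q" using assms(1) by (simp add: power2_eq_square)
  have ty: "t*(y-1) \<ge> 1*(y-1)" if "y \<ge> 1" using assms(2) that by (intro mult_right_mono) auto
  show ?thesis
  proof (cases "y = q^2")
    case True
    show ?thesis
    proof (cases "t = 1")
      case True
      thus ?thesis using assms(1,4) \<open>y = q^2\<close> by simp
    next
      case False
      hence "t \<ge> 2" using assms by auto
      hence "t*(y-1) \<ge> 2*(y-1)" using \<open>y = q^2\<close> Q assms(1) by (intro mult_right_mono) auto
      hence le: "q^2 \<le> q + 3" using assms(4) \<open>y = q^2\<close> by simp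
      have "q = 2"
      proof (rule ccontr)
        assume "q \<noteq> 2"
        hence "q \<ge> 3" using assms by auto
        hence "q*q \<ge> 3*q" by (intro mult_right_mono) auto
        thus False using le \<open>q \<ge> 3\<close> unfolding power2_eq_square by linarith
      qed
      hence "t*3 = 7" using assms(4) \<open>y = q^2\<close> by simp
      thus ?thesis by presburger
    qed
  next
    case False
    hence y3: "y \<ge> q^3" using assms(3) by auto
    have q3: "q^3 = q * q^2" by (simp add: power3_eq_cube power2_eq_square)
    have "q^3 \<ge> 2*q^2" unfolding q3 using assms(1) by (intro mult_right_mono) auto
    hence "y \<ge> 1" using y3 Q assms(1) by linarith
    hence le: "q^3 - 1 \<le> q^2 + q + 1" using ty[OF \<open>y \<ge> 1\<close>] assms(4) y3 by (smt (verit))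
    have "q = 2"
    proof (rule ccontr)
      assume "q \<noteq> 2"
      hence "q \<ge> 3" using assms by auto
      hence "q * q^2 \<ge> 3 * q^2" by (intro mult_right_mono) auto
      moreover have "q*q \<ge> 3*q" using \<open>q \<ge> 3\<close> by (intro mult_right_mono) auto
      ultimately show False using le q3 \<open>q \<ge> 3\<close> unfolding power2_eq_square by linarith
    qed
    hence "y \<ge> 8" "t*(y-1) = 7" using y3 assms(4) by auto
    hence "y - 1 \<le> 7" using ty[OF \<open>y \<ge> 1\<close>] by (smt (verit))
    hence "y = 8" using \<open>y \<ge> 8\<close> by auto
    thus ?thesis using \<open>q = 2\<close> \<open>t*(y-1) = 7\<close> by simp
  qed
qed

lemma br2b:
  fixes p q m y :: int
  assumes "q \<ge> 2" "q \<noteq> 3" "y \<ge> q^2" "y = q^2 \<or> y \<ge> q^3" "p + 1 = m*y" "p \<ge> 3"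
    "p dvd (q*y)^2 + q*y + 1" "p \<noteq> 39" "\<not> (q = 2 \<and> p = 7)"
  shows False
proof -
  obtain k where k: "(q*y)^2 + q*y + 1 = p*k" using assms(7) by auto
  have ypos: "y > 0" using assms(1,3) by (smt (verit) power2_eq_square mult_pos_pos)
  have "(q*y)^2 + q*y + 1 > 0" using assms(1) ypos by (smt (verit) zero_le_power2 mult_pos_pos)
  hence kpos: "k > 0" using k assms(6) by (simp add: zero_less_mult_iff)
  have "m*y > 0" using assms(5,6) by linarith
  hence mpos: "m \<ge> 1" using ypos by (simp add: zero_less_mult_iff)
  have pe: "p = m*y - 1" using assms(5) by linarith
  define j where "j = k*m - q^2*y - q"
  have kj: "k + 1 = y*j" using k unfolding j_def pe by (simp add: algebra_simps power2_eq_square)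
  have "y*j > 0" using kj kpos by linarith
  hence jpos: "j \<ge> 1" using ypos by (simp add: zero_less_mult_iff)
  have "y * (j*m*y - j - m) = y * (q^2*y + q)"
  proof -
    have "(y*j - 1)*(m*y - 1) = (q*y)^2 + q*y + 1" using k kj pe by simp
    thus ?thesis by (simp add: algebra_simps power2_eq_square)
  qed
  hence E: "j*m*y - j - m = q^2*y + q" using ypos by simp
  define t where "t = j*m - q^2"
  have ty: "t*y = q + j + m" using E unfolding t_def by (simp add: algebra_simps)
  have "t*y > 0" using ty assms(1) jpos mpos by linarith
  hence tpos: "t \<ge> 1" using ypos by (simp add: zero_less_mult_iff)
  show False
  proof (cases "j = 1 \<or> m = 1")
    case True
    have "t*(y-1) = q^2+q+1" using True ty unfolding t_def by (auto simp: algebra_simps)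
    hence "q = 2 \<and> y = 8 \<and> t = 1" using tq assms(1,4) tpos by blast
    thus False using True assms(8,9) pe unfolding t_def by auto
  next
    case False
    hence j2: "j \<ge> 2" and m2: "m \<ge> 2" using jpos mpos by auto
    have "(j-2)*(m-2) \<ge> 0" using j2 m2 by simp
    hence jm: "j*m - 2*j - 2*m + 4 \<ge> 0" by (simp add: algebra_simps)
    have "t*(2*y-1) \<ge> 1*(2*y - 1)" using tpos ypos by (intro mult_right_mono) auto
    have le0: "t*(2*y-1) \<le> q^2+2*q+4"
    proof -
      have "t*(2*y-1) = 2*(t*y) - t" by (simp add: algebra_simps)
      thus ?thesis using ty jm t_def by linarith
    qed
    have le: "2*y - 1 \<le> q^2 + 2*q + 4" using le0 \<open>t*(2*y-1) \<ge> 1*(2*y - 1)\<close> by (smt (verit))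
    have "q = 2"
    proof (rule ccontr)
      assume "q \<noteq> 2"
      hence "q \<ge> 4" using assms(1,2) by auto
      hence "q*q \<ge> 4*q" by (intro mult_right_mono) auto
      thus False using le assms(3) \<open>q \<ge> 4\<close> unfolding power2_eq_square by linarith
    qed
    hence "y = 4" using le assms(3,4) by auto
    hence "4*t = 2 + j + m" "t*7 \<le> 12" using ty \<open>q = 2\<close> le0 by auto
    thus False using j2 m2 tpos by presburger
  qed
qed

lemma brq3:
  fixes p m y :: int
  assumes "p \<ge> 3" "odd p" "y \<ge> 1" "odd y" "p + 1 = m*y" "p dvd 9 - m"
  shows False
proof -
  have "m*y > 0" using assms by linarith
  hence m1: "m \<ge> 1" using assms(3) by (simp add: zero_less_mult_iff)
  have my: "m*y \<ge> m*1" using m1 assms(3) by (intro mult_left_mono) auto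
  consider "m = 9" | "m > 9" | "m < 9" by linarith
  thus False
  proof cases
    case 1
    hence "p = 9*y - 1" using assms(5) by simp
    thus False using assms(2,4) by simp
  next
    case 2
    hence "p dvd m - 9" using assms(6) by (metis dvd_minus_iff minus_diff_eq)
    hence "p \<le> m - 9" using 2 zdvd_imp_le by auto
    thus False using my assms(5) by linarith
  next
    case 3
    hence pl: "p \<le> 9 - m" using assms(6) zdvd_imp_le by auto
    show False
    proof (cases "y = 1")
      case True
      hence "p \<le> 4" using pl assms(5) by simp
      hence "p = 3" using assms(1,2) by presburger
      thus False using assms(5,6) True by simp
    next
      case False
      hence "y \<ge> 3" using assms(3,4) by presburger
      hence "m*y \<ge> m*3" using m1 by (intro mult_left_mono) auto
      hence "m \<le> 2" using pl assms(5) by linarith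
      hence "m = 1 \<or> m = 2" using m1 by auto
      thus False
      proof
        assume "m = 1"
        thus False using assms(2,4,5) by simp presburger
      next
        assume "m = 2"
        hence "y \<le> 4" using pl assms(5) by simp
        hence "y = 3" using \<open>y \<ge> 3\<close> assms(4) by presburger
        thus False using \<open>m = 2\<close> assms(5,6) by simp
      qed
    qed
  qed
qed

lemma fermat_int:
  fixes p x :: int
  assumes "prime p" "\<not> p dvd x"
  shows "[x^(nat p - 1) = 1] (mod p)"
proof -
  define P where "P = nat p"
  have p0: "p > 0" using assms(1) prime_gt_0_int by auto
  hence pP: "p = int P" unfolding P_def by simp
  have P: "prime P" using assms(1) pP by simp
  define r where "r = nat (x mod p)"
  have r: "int r = x mod p" unfolding r_def using p0 by simp
  have "\<not> P dvd r"
  proof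
    assume "P dvd r"
    hence "p dvd x mod p" using pP r by (metis of_nat_dvd_iff)
    thus False using assms(2) by (simp add: dvd_mod_iff)
  qed
  hence "[r^(P-1) = 1] (mod P)" using fermat_theorem P by blast
  hence "[int r^(P-1) = 1] (mod p)" using pP by (metis cong_int_iff of_nat_1 of_nat_power)
  moreover have "[x = int r] (mod p)" using r by (simp add: cong_def)
  hence "[x^(P-1) = int r^(P-1)] (mod p)" by (rule cong_pow)
  ultimately show ?thesis unfolding P_def using cong_trans by blast
qed

lemma p_mod3_split:
  fixes p :: int
  assumes "p mod 3 = 2" "p \<ge> 2"
  obtains k where "nat p - 1 = 3*k + 1"
proof -
  have "int (nat p - 1) = 3 * ((p - 2) div 3) + 1" using assms by simp presburger
  moreover have "(p-2) div 3 \<ge> 0" using assms by simp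
  ultimately have "int (nat p - 1) = int (3 * nat ((p - 2) div 3) + 1)" by simp
  hence "nat p - 1 = 3 * nat ((p - 2) div 3) + 1" by (simp only: of_nat_eq_iff)
  thus ?thesis using that by blast
qed

lemma no_mod2:
  fixes p x :: int
  assumes "prime p" "p mod 3 = 2" "p dvd x^2+x+1"
  shows False
proof -
  have p2: "p \<ge> 2" using assms(1) prime_ge_2_int by auto
  have nx: "\<not> p dvd x"
  proof
    assume "p dvd x"
    hence "p dvd x*(x+1)" by simp
    hence "p dvd (x^2+x+1) - x*(x+1)" using assms(3) by (rule dvd_diff[rotated])
    hence "p dvd 1" by (simp add: algebra_simps power2_eq_square)
    thus False using assms(1) not_prime_unit by blast
  qed
  have "x^3 - 1 = (x-1)*(x^2+x+1)" by (simp add: algebra_simps power2_eq_square power3_eq_cube)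
  hence "p dvd x^3 - 1" using assms(3) by simp
  hence c3: "[x^3 = 1] (mod p)" by (simp add: cong_iff_dvd_diff)
  obtain k where k: "nat p - 1 = 3*k + 1" using p_mod3_split assms(2) p2 by blast
  have "[x^(nat p - 1) = 1] (mod p)" using fermat_int assms(1) nx by blast
  moreover have "x^(nat p - 1) = (x^3)^k * x" unfolding k by (simp add: power_mult power_add)
  moreover have "[(x^3)^k * x = 1^k * x] (mod p)" using c3 by (intro cong_mult cong_pow) auto
  ultimately have "[x = 1] (mod p)" by (metis cong_sym cong_trans mult_1 power_one)
  hence "[x^2+x+1 = 1^2+1+1] (mod p)" by (intro cong_add cong_pow) auto
  hence "p dvd 3" using assms(3) cong_dvd_iff by fastforce
  hence "p \<le> 3" by (simp add: zdvd_imp_le)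
  hence "p = 2 \<or> p = 3" using p2 by auto
  thus False using \<open>p dvd 3\<close> assms(2) by auto
qed

lemma q_not_dvd:
  fixes p q :: int
  assumes "prime p" "prime q" "p \<noteq> q" "q mod 3 = 2" "q \<noteq> 2"
  shows "\<not> q dvd p^2 - p + 1"
proof
  assume h: "q dvd p^2 - p + 1"
  have q2: "q \<ge> 2" using assms(2) prime_ge_2_int by auto
  have np: "\<not> q dvd p" using assms primes_dvd_imp_eq by metis
  have "p^3 + 1 = (p+1)*(p^2-p+1)" by (simp add: algebra_simps power2_eq_square power3_eq_cube)
  hence "q dvd p^3 - (-1)" using h by simp
  hence c3: "[p^3 = -1] (mod q)" by (simp add: cong_iff_dvd_diff)
  obtain k where k: "nat q - 1 = 3*k + 1" using p_mod3_split assms(4) q2 by blast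
  have "[p^(nat q - 1) = 1] (mod q)" using fermat_int assms(2) np by blast
  moreover have "p^(nat q - 1) = (p^3)^k * p" unfolding k by (simp add: power_mult power_add)
  moreover have "[(p^3)^k * p = (-1)^k * p] (mod q)" using c3 by (intro cong_mult cong_pow) auto
  ultimately have c: "[(-1)^k * p = 1] (mod q)" by (metis cong_sym cong_trans)
  show False
  proof (cases "even k")
    case True
    hence "[p = 1] (mod q)" using c by simp
    hence "[p^2-p+1 = 1^2-1+1] (mod q)" by (intro cong_add cong_diff cong_pow) auto
    hence "q dvd 1" using h cong_dvd_iff by fastforce
    thus False using assms(2) not_prime_unit by blast
  next
    case False
    hence "[-p = 1] (mod q)" using c by simp
    hence "[p = -1] (mod q)" by (metis cong_minus_minus_iff minus_minus)
    hence "[p^2-p+1 = (-1)^2-(-1)+1] (mod q)" by (intro cong_add cong_diff cong_pow) auto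
    hence "q dvd 3" using h cong_dvd_iff by fastforce
    hence "q \<le> 3" by (simp add: zdvd_imp_le)
    hence "q = 3" using q2 assms(5) by auto
    thus False using assms(4) by simp
  qed
qed

lemma stepE:
  fixes p q :: int and a :: nat
  assumes "p dvd (\<Sum>i\<le>a. (q^3)^i)" "p dvd q^3 - 1"
  shows "p dvd int a + 1"
proof -
  have c: "[q^3 = 1] (mod p)" using assms(2) by (simp add: cong_iff_dvd_diff)
  have "[(\<Sum>i\<le>a. (q^3)^i) = (\<Sum>i\<le>a. 1)] (mod p)"
    by (rule cong_sum) (metis c cong_pow power_one)
  hence "[(\<Sum>i\<le>a. (q^3)^i) = int a + 1] (mod p)" by (simp add: add.commute)
  thus ?thesis using assms(1) cong_dvd_iff by blast
qed

lemma prime_dvd_small: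
  fixes p c :: int
  assumes "prime p" "prime c" "p dvd c"
  shows "p = c"
  using assms primes_dvd_imp_eq by blast

lemma q3case:
  fixes p :: int and a :: nat
  assumes "prime p" "p \<noteq> 2" "p \<noteq> 3" "a \<ge> 1" "3^a dvd 1 + p^3"
    "p dvd (\<Sum>i\<le>a. ((3::int)^3)^i)"
  shows False
proof -
  have p2: "p \<ge> 2" using assms(1) prime_ge_2_int by auto
  hence p3: "p \<ge> 3" using assms(2) by auto
  have podd: "odd p" using assms(1) p3 prime_odd_int by auto
  have "(3::int) dvd 3^a" using assms(4) by (simp add: dvd_power)
  hence d3: "3 dvd 1 + p^3" using assms(5) dvd_trans by blast
  have pm: "p mod 3 = 2"
  proof -
    have "(1 + p^3) mod 3 = (1 + (p mod 3)^3) mod 3" by (metis mod_add_right_eq power_mod)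
    moreover have "p mod 3 \<noteq> 0"
    proof
      assume "p mod 3 = 0"
      hence "3 dvd p" by auto
      thus False using prime_dvd_small[of 3 p] assms(1,3) by simp
    qed
    moreover have "p mod 3 \<ge> 0" "p mod 3 < 3" by auto
    ultimately have "p mod 3 = 1 \<or> p mod 3 = 2" by auto
    thus ?thesis using d3 \<open>(1 + p^3) mod 3 = _\<close> by auto
  qed
  have "3 dvd p + 1" using pm by presburger
  then obtain u where u: "p + 1 = 3*u" unfolding dvd_def by blast
  define w where "w = 3*u^2 - 3*u + 1"
  have "1 + p^3 = 3 * ((3*u) * w)"
  proof -
    have pe: "p = 3*u - 1" using u by linarith
    show ?thesis unfolding w_def pe by (simp add: algebra_simps power2_eq_square power3_eq_cube)
  qed
  obtain b where b: "a = Suc b" using assms(4) by (cases a) auto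
  have "3 * 3^b dvd 3 * ((3*u) * w)" using assms(5) b \<open>1 + p^3 = _\<close> by simp
  hence "3^b dvd (3*u) * w" by (subst (asm) dvd_times_left_cancel_iff) auto
  moreover have "coprime (3^b) w"
  proof -
    have "\<not> 3 dvd w" unfolding w_def by presburger
    hence "coprime 3 w" by (intro prime_imp_coprime) auto
    thus ?thesis by simp
  qed
  ultimately have ydvd: "3^b dvd p + 1" using u by (simp add: coprime_dvd_mult_left_iff)
  then obtain m where m: "p + 1 = m * 3^b" by (auto simp: mult.commute elim!: dvdE)
  have n26: "\<not> p dvd 3^3 - 1"
  proof
    assume "p dvd 3^3 - 1"
    hence "p dvd 2 * 13" by simp
    hence "p dvd 2 \<or> p dvd 13" using assms(1) prime_dvd_mult_iff by blast
    thus False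
    proof
      assume "p dvd 2" thus False using zdvd_imp_le p3 by fastforce
    next
      assume "p dvd 13"
      hence "p = 13" using prime_dvd_small[of p 13] assms(1) by simp
      thus False using pm by simp
    qed
  qed
  define x where "x = (3::int)^(a+1)"
  have "(3^3 - 1) * (\<Sum>i\<le>a. ((3::int)^3)^i) = (3^3)^(a+1) - 1"
    using power_diff_1_eq[of "(3::int)^3" "a+1"] by (simp add: lessThan_Suc_atMost)
  also have "\<dots> = x^3 - 1" unfolding x_def by (metis power_mult mult.commute)
  also have "\<dots> = (x - 1) * (x^2 + x + 1)" by (simp add: algebra_simps power2_eq_square power3_eq_cube)
  finally have "p dvd (x - 1) * (x^2 + x + 1)" using assms(6) by (metis dvd_mult)
  hence "p dvd x - 1 \<or> p dvd x^2 + x + 1" using assms(1) prime_dvd_mult_iff by blast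
  thus False
  proof
    assume "p dvd x^2 + x + 1"
    thus False using no_mod2 assms(1) pm by blast
  next
    assume h: "p dvd x - 1"
    have x9: "x = 9 * 3^b" unfolding x_def b by simp
    have "m * (x - 1) = 9*(p+1) - m" unfolding x9 using m by (simp add: algebra_simps)
    hence "m * (x - 1) = 9*p + (9 - m)" by simp
    moreover have "p dvd m * (x - 1)" using h by simp
    ultimately have "p dvd 9 - m" by (metis dvd_add_right_iff dvd_triv_right)
    moreover have "odd ((3::int)^b)" by simp
    moreover have "(3::int)^b \<ge> 1" by simp
    ultimately show False using brq3[of p "3^b" m] p3 podd m by simp
  qed
qed

lemma pow2_bound:
  fixes a :: nat
  assumes "a \<ge> 3"
  shows "a + 2 < 2^a"
  using assms
proof (induction a rule: dec_induct)
  case base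
  then show ?case by simp
next
  case (step n)
  then show ?case by simp
qed

lemma core:
  fixes p q :: int and a :: nat
  assumes pp: "prime p" and pq: "prime q" and "p \<noteq> q" and a1: "a \<ge> 1" and "q mod 3 \<noteq> 1"
    and A: "q^a dvd 1 + p^3" and B: "p dvd (\<Sum>i\<le>a. (q^3)^i)"
  shows "(q = 2 \<and> p = 2^(a+1) - 1 \<and> p \<noteq> 7) \<or> (p = 2 \<and> q = 3 \<and> a = 1)"
proof -
  have q2: "q \<ge> 2" using pq prime_ge_2_int by auto
  have p2: "p \<ge> 2" using pp prime_ge_2_int by auto
  define x where "x = q^(a+1)"
  have "(q^3 - 1) * (\<Sum>i\<le>a. (q^3)^i) = (q^3)^(a+1) - 1"
    using power_diff_1_eq[of "q^3" "a+1"] by (simp add: lessThan_Suc_atMost)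
  also have "\<dots> = x^3 - 1" unfolding x_def by (metis power_mult mult.commute)
  also have "\<dots> = (x - 1) * (x^2 + x + 1)" by (simp add: algebra_simps power2_eq_square power3_eq_cube)
  finally have px: "p dvd (x - 1) * (x^2 + x + 1)" using B by (metis dvd_mult)
  show ?thesis
  proof (cases "p = 2")
    case True
    have "q dvd q^a" using a1 by (simp add: dvd_power)
    moreover have "q^a dvd 9" using A True by simp
    ultimately have "q dvd 9" by (rule dvd_trans)
    hence "q dvd 3 * 3" by simp
    hence "q dvd 3" using pq prime_dvd_mult_iff by blast
    hence q3: "q = 3" using prime_dvd_small[of q 3] pq by simp
    have "a \<le> 2"
    proof (rule ccontr)
      assume "\<not> a \<le> 2"
      hence "(3::int)^3 dvd 3^a" by (intro le_imp_power_dvd) auto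
      moreover have "q^a dvd 9" using A True by simp
      ultimately have "(27::int) dvd 9" using q3 dvd_trans[of "27::int" "3^a" 9] by simp
      thus False by simp
    qed
    hence "a = 1 \<or> a = 2" using a1 by auto
    thus ?thesis
    proof
      assume "a = 2"
      hence "(2::int) dvd 757" using B True q3 by (simp add: eval_nat_numeral)
      thus ?thesis by simp
    qed (use True q3 in simp)
  next
    case False
    hence p3: "p \<ge> 3" using p2 by auto
    have podd: "odd p" using pp p3 prime_odd_int by auto
    show ?thesis
    proof (cases "q = 3")
      case True
      hence "False" using q3case[of p a] pp False assms(3) a1 A B by simp
      thus ?thesis ..
    next
      case qn3: False
      have qm: "q mod 3 = 2"
      proof -
        have "q mod 3 \<noteq> 0"
        proof
          assume "q mod 3 = 0"
          hence "3 dvd q" by auto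
          thus False using prime_dvd_small[of 3 q] pq qn3 by simp
        qed
        moreover have "q mod 3 \<ge> 0" "q mod 3 < 3" by auto
        ultimately show ?thesis using assms(5) by auto
      qed
      have fac: "1 + p^3 = (p+1)*(p^2-p+1)" by (simp add: algebra_simps power2_eq_square power3_eq_cube)
      have cop: "coprime (q^a) (p^2-p+1)"
      proof (cases "q = 2")
        case True
        have "odd (p^2-p+1)" using podd by simp
        hence "coprime 2 (p^2-p+1)" by (intro prime_imp_coprime) auto
        thus ?thesis using True by simp
      next
        case False
        have "\<not> q dvd p^2 - p + 1" using q_not_dvd[of p q] pp pq assms(3) qm False by simp
        hence "coprime q (p^2-p+1)" using pq by (intro prime_imp_coprime)
        thus ?thesis by simp
      qed
      have "q^a dvd (p+1)*(p^2-p+1)" using A fac by simp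
      hence "q^a dvd p+1" using cop by (simp add: coprime_dvd_mult_left_iff)
      then obtain m where m: "p + 1 = m * q^a" by (metis dvd_def mult.commute)
      define y where "y = q^a"
      have "q^1 \<le> q^a" using a1 q2 by (intro power_increasing) auto
      hence yq: "y \<ge> q" unfolding y_def by simp
      have ypos: "y > 0" unfolding y_def using q2 by simp
      have "m * y > 0" using m p3 unfolding y_def by simp
      hence mpos: "m \<ge> 1" using ypos by (simp add: zero_less_mult_iff)
      have yle: "y \<le> p + 1" using zdvd_imp_le[of y "p+1"] m p3 unfolding y_def by simp
      have nE: "\<not> p dvd q^3 - 1"
      proof
        assume h: "p dvd q^3 - 1"
        have "p dvd int a + 1" using stepE[OF B h] .
        hence pa: "p \<le> int a + 1" using zdvd_imp_le by simp
        have "(2::int)^a \<le> q^a" using q2 by (intro power_mono) auto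
        hence "(2::int)^a \<le> int a + 2" using yle pa unfolding y_def by linarith
        hence "a + 2 \<ge> (2::nat)^a" by (metis of_nat_le_iff of_nat_add of_nat_numeral of_nat_power)
        hence "a < 3" using pow2_bound by (metis not_less leD)
        hence "a = 1 \<or> a = 2" using a1 by auto
        thus False
        proof
          assume "a = 1" thus False using pa p3 by simp
        next
          assume a2: "a = 2"
          hence "p = 3" using pa p3 by simp
          have "q^2 \<le> 4" using yle a2 \<open>p = 3\<close> unfolding y_def by simp
          hence "q = 2"
          proof -
            have "q*q \<ge> 2*q" using q2 by (intro mult_right_mono) auto
            thus ?thesis using \<open>q^2 \<le> 4\<close> q2 unfolding power2_eq_square by linarith
          qed
          thus False using h \<open>p = 3\<close> by simp
        qed
      qed
      have xqy: "x = q * y" unfolding x_def y_def by simp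
      have "p dvd x - 1 \<or> p dvd x^2 + x + 1" using px pp prime_dvd_mult_iff by blast
      thus ?thesis
      proof
        assume h: "p dvd x - 1"
        have "m * (x - 1) = q*(m*q^a) - m" unfolding xqy y_def by (simp add: algebra_simps)
        also have "\<dots> = q*p + (q - m)" unfolding m[symmetric] by (simp add: algebra_simps)
        finally have "m * (x - 1) = q*p + (q - m)" .
        moreover have "p dvd m * (x - 1)" using h by simp
        ultimately have "p dvd q - m" by (metis dvd_add_right_iff dvd_triv_right mult.commute)
        moreover have "p \<noteq> q - 1"
        proof
          assume "p = q - 1"
          hence "even q" using podd by simp
          hence "q = 2" using prime_dvd_small[of 2 q] pq by simp
          thus False using \<open>p = q - 1\<close> p3 by simp
        qed
        moreover have "p + 1 = m * y" using m unfolding y_def by simp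
        ultimately have "m = q" using br1[of p q y m] p3 q2 yq mpos by blast
        hence px1: "p + 1 = x" using m xqy unfolding y_def by simp
        have "q = 2"
        proof (rule ccontr)
          assume "q \<noteq> 2"
          hence "odd q" using pq q2 prime_odd_int by auto
          hence "odd x" unfolding x_def by simp
          moreover have "even (p+1)" using podd by simp
          ultimately show False using px1 by simp
        qed
        moreover have "p \<noteq> 7" using nE \<open>q = 2\<close> by auto
        ultimately show ?thesis using px1 unfolding x_def by auto
      next
        assume h: "p dvd x^2 + x + 1"
        show ?thesis
        proof (cases "a = 1")
          case True
          have "x^2 + x + 1 = (q^2+q+1)*(q^2-q+1)" unfolding x_def True
            by (simp add: algebra_simps power2_eq_square power3_eq_cube)
          moreover have "\<not> p dvd q^2+q+1"
          proof
            assume "p dvd q^2+q+1"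
            hence "p dvd (q-1)*(q^2+q+1)" by simp
            moreover have "(q-1)*(q^2+q+1) = q^3 - 1" by (simp add: algebra_simps power2_eq_square power3_eq_cube)
            ultimately show False using nE by simp
          qed
          ultimately have "p dvd q^2-q+1" using h pp prime_dvd_mult_iff by metis
          moreover have "p = m*q - 1" using m True by simp
          moreover note mpos
          ultimately have "q = 2 \<and> m = 2" using br2a[of q m p] q2 p3 by blast
          thus ?thesis using \<open>p = m*q - 1\<close> True by simp
        next
          case False
          have "y \<ge> q^2" unfolding y_def using q2 a1 False by (intro power_increasing) auto
          moreover have "y = q^2 \<or> y \<ge> q^3"
          proof (cases "a = 2")
            case True thus ?thesis unfolding y_def by simp
          next
            case False
            hence "a \<ge> 3" using \<open>a \<noteq> 1\<close> a1 by auto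
            thus ?thesis unfolding y_def using q2 by (intro disjI2 power_increasing) auto
          qed
          moreover have "p \<noteq> 39"
          proof
            assume "p = 39"
            hence "3 dvd p" by simp
            thus False using prime_dvd_small[of 3 p] pp \<open>p = 39\<close> by simp
          qed
          moreover have "\<not> (q = 2 \<and> p = 7)" using nE by auto
          moreover have "p + 1 = m * y" using m unfolding y_def by simp
          ultimately have False using br2b[of q y p m] q2 qn3 p3 h xqy by simp
          thus ?thesis ..
        qed
      qed
    qed
  qed
qed

lemma divs_pq:
  fixes p q a :: nat
  assumes "prime p" "prime q" "p \<noteq> q"
  shows "{d. d dvd p*q^a \<and> d>0} = (\<lambda>i. q^i) ` {..a} \<union> (\<lambda>i. p*q^i) ` {..a}"
proof (intro equalityI subsetI)
  fix d assume "d \<in> {d. d dvd p*q^a \<and> d>0}"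
  hence d: "d dvd p*q^a" by auto
  show "d \<in> (\<lambda>i. q^i) ` {..a} \<union> (\<lambda>i. p*q^i) ` {..a}"
  proof (cases "p dvd d")
    case True
    then obtain e where e: "d = p*e" by auto
    with d have "e dvd q^a" using assms(1) by (auto simp: prime_gt_0_nat)
    then obtain i where "i\<le>a" "e = q^i" using divides_primepow_nat[OF assms(2)] by auto
    with e show ?thesis by auto
  next
    case False
    hence "coprime p d" using assms(1) prime_imp_coprime by auto
    hence "d dvd q^a" using d coprime_dvd_mult_right_iff by (metis coprime_commute)
    then obtain i where "i\<le>a" "d = q^i" using divides_primepow_nat[OF assms(2)] by auto
    thus ?thesis by auto
  qed
next
  fix d assume "d \<in> (\<lambda>i. q^i) ` {..a} \<union> (\<lambda>i. p*q^i) ` {..a}"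
  then show "d \<in> {d. d dvd p*q^a \<and> d>0}"
    using assms by (auto simp: prime_gt_0_nat le_imp_power_dvd mult_dvd_mono)
qed

lemma divsum_pq:
  fixes p q a k :: nat
  assumes "prime p" "prime q" "p \<noteq> q"
  shows "(\<Sum>d | d dvd p*q^a \<and> d>0. d^k) = (1+p^k) * (\<Sum>i\<le>a. (q^i)^k)"
proof -
  have q1: "q > 1" using assms prime_gt_1_nat by auto
  have inj1: "inj_on (\<lambda>i. q^i) {..a}" using q1 by (auto simp: inj_on_def power_inject_exp)
  have inj2: "inj_on (\<lambda>i. p*q^i) {..a}" using q1 assms(1) by (auto simp: inj_on_def power_inject_exp prime_gt_0_nat)
  have disj: "(\<lambda>i. q^i) ` {..a} \<inter> (\<lambda>i. p*q^i) ` {..a} = {}"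
  proof (rule ccontr)
    assume "\<not> ?thesis"
    then obtain i j where "q^i = p*q^j" by auto
    hence "p dvd q^i" by simp
    hence "p dvd q" using assms(1) prime_dvd_power by blast
    thus False using assms primes_dvd_imp_eq by blast
  qed
  have "(\<Sum>d | d dvd p*q^a \<and> d>0. d^k) = (\<Sum>d\<in>(\<lambda>i. q^i) ` {..a} \<union> (\<lambda>i. p*q^i) ` {..a}. d^k)"
    using divs_pq[OF assms] by simp
  also have "\<dots> = (\<Sum>d\<in>(\<lambda>i. q^i) ` {..a}. d^k) + (\<Sum>d\<in>(\<lambda>i. p*q^i) ` {..a}. d^k)"
    by (rule sum.union_disjoint) (use disj in auto)
  also have "\<dots> = (\<Sum>i\<le>a. (q^i)^k) + (\<Sum>i\<le>a. (p*q^i)^k)"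
    by (simp add: sum.reindex inj1 inj2)
  also have "\<dots> = (1+p^k) * (\<Sum>i\<le>a. (q^i)^k)"
    by (simp add: power_mult_distrib sum_distrib_left sum.distrib algebra_simps)
  finally show ?thesis .
qed


theorem theorem1p7:
  fixes n p q \<alpha> :: nat
  assumes "\<alpha> \<ge> 1" and "prime p" and "prime q" and "p \<noteq> q"
    and "q mod 3 \<noteq> 1"
    and "n = p * q ^ \<alpha>"
    and "n dvd sigma3 n"
  shows "perfect n \<and> even n \<and> n \<noteq> 28"
proof -
  note a1 = assms(1) and pp = assms(2) and pq = assms(3) and pnq = assms(4)
  define S where "S = (\<Sum>i\<le>\<alpha>. (q^i)^3)"
  have sig: "sigma3 n = (1+p^3) * S" unfolding sigma3_def assms(6) S_def using divsum_pq[OF pp pq pnq] by simp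
  obtain b where b: "\<alpha> = Suc b" using a1 by (cases \<alpha>) auto
  define X where "X = (\<Sum>i\<le>b. (q^(Suc i))^3)"
  have SX: "S = X + 1" unfolding S_def b X_def sum.atMost_Suc_shift by simp
  have "q dvd X" unfolding X_def by (intro dvd_sum) (simp add: power_mult_distrib)
  hence "q dvd X + 1 \<longleftrightarrow> q dvd 1" by (rule dvd_add_right_iff)
  hence "q dvd S \<longleftrightarrow> q dvd 1" using SX by simp
  hence "\<not> q dvd S" using pq by auto
  hence "coprime q S" using pq by (intro prime_imp_coprime)
  hence copS: "coprime (q^\<alpha>) S" by simp
  have "q^\<alpha> dvd n" using assms(6) by simp
  hence "q^\<alpha> dvd (1+p^3) * S" using assms(7) sig by (metis dvd_trans)
  hence A: "q^\<alpha> dvd 1+p^3" using copS coprime_dvd_mult_left_iff by blast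
  have "p dvd n" using assms(6) by simp
  hence "p dvd (1+p^3) * S" using assms(7) sig by (metis dvd_trans)
  moreover have "\<not> p dvd 1+p^3"
  proof
    assume "p dvd 1+p^3"
    moreover have "p dvd p^3" by simp
    ultimately have "p dvd 1" using dvd_add_left_iff[of p "p^3" 1] by blast
    thus False using pp by simp
  qed
  ultimately have B: "p dvd S" using pp prime_dvd_mult_iff by blast
  have Ai: "int q ^ \<alpha> dvd 1 + int p ^ 3"
  proof -
    have "int (q^\<alpha>) dvd int (1+p^3)" using A by (simp only: of_nat_dvd_iff)
    thus ?thesis by simp
  qed
  have Si: "int S = (\<Sum>i\<le>\<alpha>. (int q^3)^i)"
    unfolding S_def of_nat_sum of_nat_power by (intro sum.cong refl) (metis power_mult mult.commute)
  have Bi: "int p dvd (\<Sum>i\<le>\<alpha>. (int q^3)^i)" using B Si by (metis of_nat_dvd_iff)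
  have qm: "int q mod 3 \<noteq> 1" using assms(5) by (metis of_nat_mod of_nat_numeral of_nat_eq_iff of_nat_1)
  have "(int q = 2 \<and> int p = 2^(\<alpha>+1) - 1 \<and> int p \<noteq> 7) \<or> (int p = 2 \<and> int q = 3 \<and> \<alpha> = 1)"
    using core[of "int p" "int q" \<alpha>] pp pq pnq a1 qm Ai Bi by simp
  thus ?thesis
  proof
    assume h: "int q = 2 \<and> int p = 2^(\<alpha>+1) - 1 \<and> int p \<noteq> 7"
    hence q2: "q = 2" and p7: "p \<noteq> 7" by auto
    have "int (p + 1) = int (2^(\<alpha>+1))" using h by simp
    hence p1: "p + 1 = 2^(\<alpha>+1)" by (simp only: of_nat_eq_iff)
    have "(\<Sum>i\<le>\<alpha>. (2::nat)^i) = 2^(\<alpha>+1) - 1"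
      using sum_power2[of "\<alpha>+1"] by (simp add: atLeast0LessThan lessThan_Suc_atMost)
    hence s2: "(\<Sum>i\<le>\<alpha>. (2::nat)^i) = p" using p1 by simp
    have "(\<Sum>d | d dvd n \<and> d>0. d) = (\<Sum>d | d dvd n \<and> d>0. d^1)" by simp
    also have "\<dots> = (1+p) * (\<Sum>i\<le>\<alpha>. (q^i)^1)" unfolding assms(6) using divsum_pq[OF pp pq pnq, where a=\<alpha> and k=1] by simp
    also have "\<dots> = 2^(\<alpha>+1) * p" using s2 p1 q2 by simp
    also have "\<dots> = 2 * n" unfolding assms(6) q2 by simp
    finally have sum2: "(\<Sum>d | d dvd n \<and> d>0. d) = 2 * n" .
    have "n > 0" unfolding assms(6) using pp q2 by (simp add: prime_gt_0_nat)
    hence perf: "perfect n" unfolding perfect_def using sum2 by blast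
    have ev: "even n" unfolding assms(6) q2 using a1 by simp
    have "n \<noteq> 28"
    proof
      assume n28: "n = 28"
      have "p \<ge> 1" using pp prime_gt_0_nat by (simp add: Suc_leI)
      show False
      proof (cases "\<alpha> \<ge> 5")
        case True
        have "(2::nat)^5 \<le> 2^\<alpha>" using True by (intro power_increasing) auto
        hence "1 * 2^5 \<le> p * 2^\<alpha>" using \<open>p \<ge> 1\<close> by (intro mult_le_mono)
        hence "32 \<le> p * 2^\<alpha>" by simp
        thus False using n28 assms(6) q2 by simp
      next
        case False
        hence "\<alpha> = 1 \<or> \<alpha> = 2 \<or> \<alpha> = 3 \<or> \<alpha> = 4" using a1 by auto
        thus False
        proof (elim disjE)
          assume "\<alpha> = 1" thus False using n28 assms(6) q2 p1 by simp
        next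
          assume "\<alpha> = 2" thus False using p1 p7 by simp
        next
          assume "\<alpha> = 3" thus False using n28 assms(6) q2 p1 by simp
        next
          assume "\<alpha> = 4" thus False using n28 assms(6) q2 p1 by simp
        qed
      qed
    qed
    thus ?thesis using perf ev by simp
  next
    assume h: "int p = 2 \<and> int q = 3 \<and> \<alpha> = 1"
    hence p2: "p = 2" and q3: "q = 3" and a: "\<alpha> = 1" by auto
    have n6: "n = 6" using assms(6) p2 q3 a by simp
    have "(\<Sum>d | d dvd n \<and> d>0. d) = (\<Sum>d | d dvd n \<and> d>0. d^1)" by simp
    also have "\<dots> = (1+p) * (\<Sum>i\<le>\<alpha>. (q^i)^1)" unfolding assms(6) using divsum_pq[OF pp pq pnq, where a=\<alpha> and k=1] by simp
    also have "\<dots> = 12" using p2 q3 a by simp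
    finally show ?thesis unfolding perfect_def using n6 by simp
  qed
qed

end
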